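(* Consider a matched pair study and suppose the statistic $t(\cdot,\cdot)$ is effect increasing or differential increasing. If the bounded null $\overline H_0$ holds, then for every $\alpha\in(0,1)$ (with $\overline p_{\Gamma_0;k}$ computed from $q_{ij}=q_{ij}(Y)$ and $T=t(Z,Y)$): (i) for each $k$, $\{\Gamma_0\in[1,\infty]:\overline p_{\Gamma_0;k}>\alpha\}$ is a $1-\alpha$ confidence set for $\Gamma^\star_{(k)}$; (ii) for each $\Gamma_0$, $\{I-k:\overline p_{\Gamma_0;k}>\alpha,\ 0\le k\le I\}$ is a $1-\alpha$ confidence set for $I^\star(\Gamma_0)$; and (iii) these are simultaneously valid: $\mathbb P\big(\Gamma^\star\in\bigcap_{(\Gamma_0,k):\overline p_{\Gamma_0;k}\le\alpha}\mathcal S_{\Gamma_0;k}^c\big)\ge1-\alpha$.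
   Context: Setting: $I$ matched pairs; potential outcomes fixed; $Z\in\mathcal Z=\{z\in\{0,1\}^{2I}:z_{i1}+z_{i2}=1\ \forall i\}$ random with true mechanism $\mathbb P(Z=z)=\prod_i\prod_j(p^\star_{ij})^{z_{ij}}$; $\Gamma^\star_i=\max_jp^\star_{ij}/\min_kp^\star_{ik}\in[1,\infty]$, $\Gamma^\star_{(k)}$ its $k$th smallest, $I^\star(\Gamma_0)=\#\{i:\Gamma^\star_i>\Gamma_0\}$, $\mathcal S_{\Gamma_0;k}=\{\Gamma\in[1,\infty]^I:\Gamma_{(k)}\le\Gamma_0\}$ ($\Gamma_{(k)}$ = $k$th smallest coordinate), complement in $[1,\infty]^I$. $Y=Z\circ Y(1)+(1-Z)\circ Y(0)$. $\overline H_0$: $Y_{ij}(1)\le Y_{ij}(0)$ for all $i,j$. $t(z,y)=\sum_i\sum_jz_{ij}q_{ij}(y)$. Effect increasing: $t(z,y+z\circ\eta+(1-z)\circ\xi)\ge t(z,y)$ for $z\in\mathcal Z$, $\eta\succcurlyeq0\succcurlyeq\xi$. Differential increasing: $t(z,y+a\circ\eta)-t(z,y)\le t(a,y+a\circ\eta)-t(a,y)$ for $z,a\in\mathcal Z$, $\eta\succcurlyeq0$. With $q_{ij}=q_{ij}(Y)$, fix an ordering by nondecreasing $|q_{i1}-q_{i2}|$ and let $\mathcal I_k$ be the first $k$ pairs; $\overline T(\Gamma_0;k)$ is a sum of independent variables equal, for $i\in\mathcal I_k$, to $\max\{q_{i1},q_{i2}\}$ w.p. $\Gamma_0/(1+\Gamma_0)$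 and $\min\{q_{i1},q_{i2}\}$ otherwise, and for $i\notin\mathcal I_k$ to $\max\{q_{i1},q_{i2}\}$; $\overline p_{\Gamma_0;k}=\mathbb P(\overline T(\Gamma_0;k)\ge c)|_{c=T}$, and $\overline p_{\Gamma_0;0}=1$. *)

theory Defs
  imports Complex_Main "HOL-Library.Extended_Real"
begin

text \<open>Matched pairs: pairs i < I, units j \<in> {0,1} (paper: j \<in> {1,2}).
  Vectors in R^{2I} are functions nat \<Rightarrow> nat \<Rightarrow> real vanishing outside the index range.\<close>

definition Vspace :: "nat \<Rightarrow> (nat \<Rightarrow> nat \<Rightarrow> real) set" where
  "Vspace I = {y. \<forall>i j. (I \<le> i \<or> 2 \<le> j) \<longrightarrow> y i j = 0}"

definition Zset :: "nat \<Rightarrow> (nat \<Rightarrow> nat \<Rightarrow> real) set" where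
  "Zset I = {z. z \<in> Vspace I \<and> (\<forall>i<I. \<forall>j<2. z i j \<in> {0, 1}) \<and> (\<forall>i<I. z i 0 + z i 1 = 1)}"

definition assign_prob :: "nat \<Rightarrow> (nat \<Rightarrow> nat \<Rightarrow> real) \<Rightarrow> (nat \<Rightarrow> nat \<Rightarrow> real) \<Rightarrow> real" where
  "assign_prob I p z = (\<Prod>i<I. \<Prod>j<2. if z i j = 1 then p i j else 1)"

definition Prob :: "nat \<Rightarrow> (nat \<Rightarrow> nat \<Rightarrow> real) \<Rightarrow> ((nat \<Rightarrow> nat \<Rightarrow> real) \<Rightarrow> bool) \<Rightarrow> real" where
  "Prob I p E = (\<Sum>z \<in> {z \<in> Zset I. E z}. assign_prob I p z)"

definition gamma_star :: "(nat \<Rightarrow> nat \<Rightarrow> real) \<Rightarrow> nat \<Rightarrow> ereal" where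
  "gamma_star p i = (if min (p i 0) (p i 1) = 0 then \<infinity>
     else ereal (max (p i 0) (p i 1) / min (p i 0) (p i 1)))"

definition kth_smallest :: "nat \<Rightarrow> (nat \<Rightarrow> ereal) \<Rightarrow> nat \<Rightarrow> ereal" where
  "kth_smallest I g k = sort (map g [0..<I]) ! (k - 1)"

definition I_star :: "nat \<Rightarrow> (nat \<Rightarrow> nat \<Rightarrow> real) \<Rightarrow> ereal \<Rightarrow> nat" where
  "I_star I p \<Gamma>0 = card {i \<in> {..<I}. gamma_star p i > \<Gamma>0}"

definition Gspace :: "nat \<Rightarrow> (nat \<Rightarrow> ereal) set" where
  "Gspace I = {\<Gamma>. \<forall>i<I. 1 \<le> \<Gamma> i}"

definition Sset :: "nat \<Rightarrow> ereal \<Rightarrow> nat \<Rightarrow> (nat \<Rightarrow> ereal) set" where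
  "Sset I \<Gamma>0 k = {\<Gamma> \<in> Gspace I. kth_smallest I \<Gamma> k \<le> \<Gamma>0}"

definition tstat :: "nat \<Rightarrow> ((nat \<Rightarrow> nat \<Rightarrow> real) \<Rightarrow> nat \<Rightarrow> nat \<Rightarrow> real)
    \<Rightarrow> (nat \<Rightarrow> nat \<Rightarrow> real) \<Rightarrow> (nat \<Rightarrow> nat \<Rightarrow> real) \<Rightarrow> real" where
  "tstat I q z y = (\<Sum>i<I. \<Sum>j<2. z i j * q y i j)"

definition effect_increasing :: "nat \<Rightarrow> ((nat \<Rightarrow> nat \<Rightarrow> real) \<Rightarrow> nat \<Rightarrow> nat \<Rightarrow> real) \<Rightarrow> bool" where
  "effect_increasing I q \<longleftrightarrow>
    (\<forall>z \<in> Zset I. \<forall>y \<in> Vspace I. \<forall>\<eta> \<in> Vspace I. \<forall>\<xi> \<in> Vspace I.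
      (\<forall>i j. 0 \<le> \<eta> i j) \<longrightarrow> (\<forall>i j. \<xi> i j \<le> 0) \<longrightarrow>
      tstat I q z (\<lambda>i j. y i j + z i j * \<eta> i j + (1 - z i j) * \<xi> i j) \<ge> tstat I q z y)"

definition differential_increasing :: "nat \<Rightarrow> ((nat \<Rightarrow> nat \<Rightarrow> real) \<Rightarrow> nat \<Rightarrow> nat \<Rightarrow> real) \<Rightarrow> bool" where
  "differential_increasing I q \<longleftrightarrow>
    (\<forall>z \<in> Zset I. \<forall>a \<in> Zset I. \<forall>y \<in> Vspace I. \<forall>\<eta> \<in> Vspace I.
      (\<forall>i j. 0 \<le> \<eta> i j) \<longrightarrow>
      tstat I q z (\<lambda>i j. y i j + a i j * \<eta> i j) - tstat I q z y
        \<le> tstat I q a (\<lambda>i j. y i j + a i j * \<eta> i j) - tstat I q a y)"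

definition Yobs :: "(nat \<Rightarrow> nat \<Rightarrow> real) \<Rightarrow> (nat \<Rightarrow> nat \<Rightarrow> real) \<Rightarrow> (nat \<Rightarrow> nat \<Rightarrow> real)
    \<Rightarrow> nat \<Rightarrow> nat \<Rightarrow> real" where
  "Yobs Y1 Y0 z = (\<lambda>i j. z i j * Y1 i j + (1 - z i j) * Y0 i j)"

definition sorts_pairs :: "nat \<Rightarrow> (nat \<Rightarrow> nat \<Rightarrow> real) \<Rightarrow> (nat \<Rightarrow> nat) \<Rightarrow> bool" where
  "sorts_pairs I qv \<pi> \<longleftrightarrow> bij_betw \<pi> {..<I} {..<I} \<and>
     (\<forall>a b. a \<le> b \<longrightarrow> b < I \<longrightarrow>
        \<bar>qv (\<pi> a) 0 - qv (\<pi> a) 1\<bar> \<le> \<bar>qv (\<pi> b) 0 - qv (\<pi> b) 1\<bar>)"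

definition theta :: "ereal \<Rightarrow> real" where
  "theta \<Gamma>0 = (if \<Gamma>0 = \<infinity> then 1 else real_of_ereal \<Gamma>0 / (1 + real_of_ereal \<Gamma>0))"

text \<open>P(Tbar(Gamma0;k) \<ge> c): Tbar is a sum of independent variables; for i in I_k it equals
  max{q_i1,q_i2} w.p. theta and min{q_i1,q_i2} otherwise (B = set of pairs taking the max),
  for i not in I_k it equals max{q_i1,q_i2}.\<close>
definition Tbar_tail :: "nat \<Rightarrow> (nat \<Rightarrow> nat \<Rightarrow> real) \<Rightarrow> (nat \<Rightarrow> nat) \<Rightarrow> ereal \<Rightarrow> nat \<Rightarrow> real \<Rightarrow> real" where
  "Tbar_tail I qv \<pi> \<Gamma>0 k c =
    (let Ik = \<pi> ` {..<k}; \<theta> = theta \<Gamma>0 in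
     \<Sum>B \<in> Pow Ik. \<theta> ^ card B * (1 - \<theta>) ^ card (Ik - B) *
       (if (\<Sum>i\<in>B. max (qv i 0) (qv i 1)) + (\<Sum>i\<in>Ik - B. min (qv i 0) (qv i 1))
           + (\<Sum>i\<in>{..<I} - Ik. max (qv i 0) (qv i 1)) \<ge> c then 1 else 0))"

definition pbar :: "nat \<Rightarrow> (nat \<Rightarrow> nat \<Rightarrow> real) \<Rightarrow> (nat \<Rightarrow> nat) \<Rightarrow> ereal \<Rightarrow> nat \<Rightarrow> real \<Rightarrow> real" where
  "pbar I qv \<pi> \<Gamma>0 k c = (if k = 0 then 1 else Tbar_tail I qv \<pi> \<Gamma>0 k c)"

definition pbar_obs :: "nat \<Rightarrow> ((nat \<Rightarrow> nat \<Rightarrow> real) \<Rightarrow> nat \<Rightarrow> nat \<Rightarrow> real)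
    \<Rightarrow> ((nat \<Rightarrow> nat \<Rightarrow> real) \<Rightarrow> nat \<Rightarrow> nat)
    \<Rightarrow> (nat \<Rightarrow> nat \<Rightarrow> real) \<Rightarrow> (nat \<Rightarrow> nat \<Rightarrow> real) \<Rightarrow> (nat \<Rightarrow> nat \<Rightarrow> real)
    \<Rightarrow> ereal \<Rightarrow> nat \<Rightarrow> real" where
  "pbar_obs I q ord Y1 Y0 z \<Gamma>0 k =
    (let y = Yobs Y1 Y0 z; qv = q y in pbar I qv (ord qv) \<Gamma>0 k (tstat I q z y))"

end

theory Submission
  imports Defs
begin


definition tail :: "nat set \<Rightarrow> (nat \<Rightarrow> real) \<Rightarrow> (nat \<Rightarrow> real) \<Rightarrow> real \<Rightarrow> real" where
  "tail S r d c = (\<Sum>B\<in>Pow S. (\<Prod>i\<in>S. if i \<in> B then r i else 1 - r i) * (if c \<le> sum d B then 1 else 0))"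

definition rstar :: "nat set \<Rightarrow> real \<Rightarrow> nat \<Rightarrow> real" where
  "rstar A \<theta> = (\<lambda>i. if i \<in> A then \<theta> else 1)"

lemma tail_empty: "tail {} r d c = (if c \<le> 0 then 1 else 0)"
  by (simp add: tail_def)

lemma tail_insert:
  assumes "finite S" "i \<notin> S"
  shows "tail (insert i S) r d c = r i * tail S r d (c - d i) + (1 - r i) * tail S r d c"
proof -
  have fin: "finite (Pow S)" using assms by simp
  have disj: "Pow S \<inter> insert i ` Pow S = {}" using assms by auto
  have inj: "inj_on (insert i) (Pow S)"
    by (rule inj_onI) (metis Pow_iff assms(2) insert_ident subsetD)
  define W where "W B = (\<Prod>x\<in>insert i S. if x \<in> B then r x else 1 - r x) * (if c \<le> sum d B then 1 else 0)" for B
  have "tail (insert i S) r d c = sum W (Pow S \<union> insert i ` Pow S)"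
    unfolding tail_def W_def Pow_insert by simp
  also have "\<dots> = sum W (Pow S) + sum W (insert i ` Pow S)"
    using fin disj by (simp add: sum.union_disjoint)
  also have "sum W (insert i ` Pow S) = sum (W \<circ> insert i) (Pow S)"
    using inj by (simp add: sum.reindex)
  also have "sum (W \<circ> insert i) (Pow S) = r i * tail S r d (c - d i)"
    unfolding tail_def sum_distrib_left
  proof (rule sum.cong[OF refl])
    fix B assume B: "B \<in> Pow S"
    then have fB: "finite B" "i \<notin> B" using assms finite_subset by auto
    have p: "(\<Prod>x\<in>S. if x \<in> insert i B then r x else 1 - r x) = (\<Prod>x\<in>S. if x \<in> B then r x else 1 - r x)"
      using assms(2) by (intro prod.cong) auto
    show "(W \<circ> insert i) B = r i * ((\<Prod>x\<in>S. if x \<in> B then r x else 1 - r x) * (if c - d i \<le> sum d B then 1 else 0))"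
      unfolding W_def comp_def using assms fB p by (simp add: prod.insert sum.insert algebra_simps)
  qed
  also have "sum W (Pow S) = (1 - r i) * tail S r d c"
    unfolding tail_def sum_distrib_left
  proof (rule sum.cong[OF refl])
    fix B assume B: "B \<in> Pow S"
    then have fB: "i \<notin> B" using assms by auto
    show "W B = (1 - r i) * ((\<Prod>x\<in>S. if x \<in> B then r x else 1 - r x) * (if c \<le> sum d B then 1 else 0))"
      unfolding W_def using assms fB by (simp add: prod.insert algebra_simps)
  qed
  finally show ?thesis by simp
qed

lemma tail_remove:
  assumes "finite S" "i \<in> S"
  shows "tail S r d c = r i * tail (S - {i}) r d (c - d i) + (1 - r i) * tail (S - {i}) r d c"
proof -
  have "S = insert i (S - {i})" using assms by auto
  then have "tail S r d c = tail (insert i (S - {i})) r d c" by simp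
  also have "\<dots> = r i * tail (S - {i}) r d (c - d i) + (1 - r i) * tail (S - {i}) r d c"
    using assms by (intro tail_insert) auto
  finally show ?thesis .
qed

lemma tail_cong:
  assumes "\<forall>i\<in>S. r i = r' i"
  shows "tail S r d c = tail S r' d c"
  unfolding tail_def using assms by (intro sum.cong refl arg_cong2[where f="(*)"] prod.cong) auto

lemma tail_antimono:
  assumes "finite S" "\<forall>i\<in>S. 0 \<le> r i \<and> r i \<le> 1" "c \<le> c'"
  shows "tail S r d c' \<le> tail S r d c"
  unfolding tail_def
proof (rule sum_mono)
  fix B assume "B \<in> Pow S"
  have "0 \<le> (\<Prod>i\<in>S. if i \<in> B then r i else 1 - r i)"
    using assms(2) by (intro prod_nonneg) auto
  then show "(\<Prod>i\<in>S. if i \<in> B then r i else 1 - r i) * (if c' \<le> sum d B then 1 else 0)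
    \<le> (\<Prod>i\<in>S. if i \<in> B then r i else 1 - r i) * (if c \<le> sum d B then 1 else 0)"
    using assms(3) by (intro mult_left_mono) auto
qed

lemma tail_total:
  assumes "finite S"
  shows "tail S r (\<lambda>_. 0) 0 = 1"
  using assms
proof (induction S rule: finite_induct)
  case empty then show ?case by (simp add: tail_empty)
next
  case (insert x F) then show ?case by (simp add: tail_insert algebra_simps)
qed

lemma tail_ones:
  assumes "finite D" "finite A" "A \<inter> D = {}" "\<forall>i\<in>D. r i = 1"
  shows "tail (A \<union> D) r d c = tail A r d (c - sum d D)"
  using assms
proof (induction D arbitrary: c rule: finite_induct)
  case empty then show ?case by simp
next
  case (insert x F)
  have "tail (A \<union> insert x F) r d c = tail (insert x (A \<union> F)) r d c" by simp
  also have "\<dots> = tail (A \<union> F) r d (c - d x)"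
    using insert by (simp add: tail_insert)
  also have "\<dots> = tail A r d (c - d x - sum d F)"
    using insert by simp
  finally show ?case using insert by (simp add: algebra_simps)
qed

lemma tail_const:
  assumes "finite A"
  shows "tail A (\<lambda>_. \<theta>) d c = (\<Sum>B\<in>Pow A. \<theta> ^ card B * (1 - \<theta>) ^ card (A - B) * (if c \<le> sum d B then 1 else 0))"
  unfolding tail_def
proof (rule sum.cong[OF refl])
  fix B assume B: "B \<in> Pow A"
  have "(\<Prod>i\<in>A. if i \<in> B then \<theta> else 1 - \<theta>) = prod (\<lambda>_. \<theta>) (A \<inter> {x. x \<in> B}) * prod (\<lambda>_. 1 - \<theta>) (A \<inter> - {x. x \<in> B})"
    using assms by (rule prod.If_cases)
  also have "\<dots> = \<theta> ^ card B * (1 - \<theta>) ^ card (A - B)"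
    using B by (simp add: Int_absorb1 Diff_eq Int_commute)
  finally show "(\<Prod>i\<in>A. if i \<in> B then \<theta> else 1 - \<theta>) * (if c \<le> sum d B then 1 else 0) =
    \<theta> ^ card B * (1 - \<theta>) ^ card (A - B) * (if c \<le> sum d B then 1 else 0)" by simp
qed



lemma nth_notin_take:
  assumes "distinct xs" "n < length xs"
  shows "xs ! n \<notin> set (take n xs)"
proof -
  have "distinct (take (Suc n) xs)" using assms by simp
  then show ?thesis using assms by (simp add: take_Suc_conv_app_nth)
qed

lemma dom_list:
  fixes xs :: "nat list"
  assumes "distinct xs" "sorted_wrt (\<lambda>x y. d x \<le> d y) xs"
    "\<forall>i\<in>set xs. 0 \<le> r i \<and> r i \<le> 1" "\<forall>i\<in>set xs. 0 \<le> d i"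
    "0 \<le> \<theta>" "\<theta> \<le> 1" "k \<le> card {i\<in>set xs. r i \<le> \<theta>}"
  shows "tail (set xs) r d c \<le> tail (set xs) (rstar (set (take k xs)) \<theta>) d c"
  using assms
proof (induction xs arbitrary: k c)
  case Nil then show ?case by (simp add: tail_empty)
next
  case (Cons j xs)
  define S where "S = set xs"
  have fS: "finite S" and jS: "j \<notin> S" using Cons.prems S_def by auto
  have r01: "\<forall>i\<in>S. 0 \<le> r i \<and> r i \<le> 1" using Cons.prems S_def by auto
  have rj: "0 \<le> r j" "r j \<le> 1" using Cons.prems by auto
  have dj: "0 \<le> d j" using Cons.prems by auto
  have rs01: "\<forall>i\<in>S. 0 \<le> rstar A \<theta> i \<and> rstar A \<theta> i \<le> 1" for A
    using Cons.prems by (auto simp: rstar_def)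
  have IH: "k' \<le> card {i\<in>S. r i \<le> \<theta>} \<Longrightarrow> tail S r d c' \<le> tail S (rstar (set (take k' xs)) \<theta>) d c'" for k' c'
  proof -
    assume a: "k' \<le> card {i\<in>S. r i \<le> \<theta>}"
    have "distinct xs" "sorted_wrt (\<lambda>x y. d x \<le> d y) xs"
      "\<forall>i\<in>set xs. 0 \<le> r i \<and> r i \<le> 1" "\<forall>i\<in>set xs. 0 \<le> d i"
      using Cons.prems by simp_all
    from Cons.IH[OF this Cons.prems(5,6)] a show ?thesis unfolding S_def by blast
  qed
  let ?T = "tail S r d"
  have LHS: "tail (set (j # xs)) r d c = r j * ?T (c - d j) + (1 - r j) * ?T c"
    using fS jS S_def by (simp add: tail_insert)
  have Tmono: "?T c \<le> ?T (c - d j)" using tail_antimono[OF fS r01] dj by simp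
  show ?case
  proof (cases "k = 0")
    case True
    let ?T1 = "tail S (rstar {} \<theta>) d"
    have R: "tail (set (j # xs)) (rstar (set (take k (j # xs))) \<theta>) d c = ?T1 (c - d j)"
      using True fS jS S_def by (simp add: tail_insert rstar_def)
    have a1: "?T x \<le> ?T1 x" for x using IH[of 0 x] by simp
    have a2: "?T1 c \<le> ?T1 (c - d j)" using tail_antimono[OF fS rs01] dj by simp
    have a3: "?T c \<le> ?T1 (c - d j)" using a1[of c] a2 by linarith
    have "r j * ?T (c - d j) + (1 - r j) * ?T c \<le> r j * ?T1 (c - d j) + (1 - r j) * ?T1 (c - d j)"
      using rj a1 a3 by (intro add_mono mult_left_mono) auto
    then show ?thesis unfolding LHS R by (simp add: algebra_simps)
  next
    case False
    show ?thesis
    proof (cases "r j \<le> \<theta>")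
      case True
      have cnt: "card {i\<in>set (j#xs). r i \<le> \<theta>} = Suc (card {i\<in>S. r i \<le> \<theta>})"
      proof -
        have "{i\<in>set (j#xs). r i \<le> \<theta>} = insert j {i\<in>S. r i \<le> \<theta>}" using True S_def by auto
        then show ?thesis using fS jS by simp
      qed
      define A where "A = set (take (k - 1) xs)"
      have AS: "A \<subseteq> S" unfolding A_def S_def by (rule set_take_subset)
      have tk: "set (take k (j # xs)) = insert j A"
        using False A_def by (cases k) auto
      let ?T' = "tail S (rstar A \<theta>) d"
      have RHS: "tail (set (j # xs)) (rstar (set (take k (j # xs))) \<theta>) d c
          = \<theta> * ?T' (c - d j) + (1 - \<theta>) * ?T' c"
      proof -
        have "tail (set (j # xs)) (rstar (insert j A) \<theta>) d c
          = rstar (insert j A) \<theta> j * tail S (rstar (insert j A) \<theta>) d (c - d j)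
            + (1 - rstar (insert j A) \<theta> j) * tail S (rstar (insert j A) \<theta>) d c"
          using fS jS S_def by (simp add: tail_insert)
        moreover have "tail S (rstar (insert j A) \<theta>) d x = ?T' x" for x
          using jS by (intro tail_cong) (auto simp: rstar_def)
        ultimately show ?thesis using tk by (simp add: rstar_def)
      qed
      have le: "?T x \<le> ?T' x" for x using IH[of "k - 1" x] cnt Cons.prems A_def by simp
      have T'mono: "?T' c \<le> ?T' (c - d j)" using tail_antimono[OF fS rs01] dj by simp
      have "r j * ?T (c - d j) + (1 - r j) * ?T c \<le> r j * ?T' (c - d j) + (1 - r j) * ?T' c"
        using le rj by (intro add_mono mult_left_mono) auto
      also have "\<dots> \<le> \<theta> * ?T' (c - d j) + (1 - \<theta>) * ?T' c"
      proof -
        have "0 \<le> (\<theta> - r j) * (?T' (c - d j) - ?T' c)" using True T'mono by simp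
        then show ?thesis by (simp add: algebra_simps)
      qed
      finally show ?thesis using LHS RHS by simp
    next
      case bad: False
      have cnt: "{i\<in>set (j#xs). r i \<le> \<theta>} = {i\<in>S. r i \<le> \<theta>}" using bad S_def by auto
      have kS: "k \<le> card {i\<in>S. r i \<le> \<theta>}" using Cons.prems cnt by simp
      also have "\<dots> \<le> card S" using fS by (intro card_mono) auto
      also have "\<dots> \<le> length xs" unfolding S_def by (rule card_length)
      finally have klen: "k \<le> length xs" .
      define l where "l = xs ! (k - 1)"
      define A where "A = set (take (k - 1) xs)"
      have dxs: "distinct xs" using Cons.prems by simp
      have lS: "l \<in> S" unfolding l_def S_def using klen False by simp
      have lA: "l \<notin> A" unfolding l_def A_def using nth_notin_take[OF dxs, of "k - 1"] klen False by simp
      have AS: "A \<subseteq> S" unfolding A_def S_def by (rule set_take_subset)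
      have tk1: "set (take k xs) = insert l A"
      proof -
        have "take k xs = take (k - 1) xs @ [l]"
          using klen False l_def take_Suc_conv_app_nth[of "k - 1" xs] by simp
        then show ?thesis unfolding A_def by simp
      qed
      have tk: "set (take k (j # xs)) = insert j A"
        using False A_def by (cases k) auto
      have djl: "d j \<le> d l" using Cons.prems lS S_def by auto
      define S' where "S' = S - {l}"
      have fS': "finite S'" using fS S'_def by simp
      let ?U = "tail S' (rstar A \<theta>) d"
      have Umono: "?U c \<le> ?U c'" if "c' \<le> c" for c c'
        using tail_antimono[OF fS', of "rstar A \<theta>"] that by (auto simp: rstar_def Cons.prems)
      have step1: "tail (set (j # xs)) r d c \<le> ?T (c - d j)"
      proof -
        have "r j * ?T (c - d j) + (1 - r j) * ?T c \<le> r j * ?T (c - d j) + (1 - r j) * ?T (c - d j)"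
          using Tmono rj by (intro add_mono mult_left_mono) auto
        then show ?thesis using LHS by (simp add: algebra_simps)
      qed
      have step2: "?T (c - d j) \<le> tail S (rstar (insert l A) \<theta>) d (c - d j)"
        using IH[OF kS, of "c - d j"] tk1 by simp
      have e1: "tail S (rstar (insert l A) \<theta>) d x = \<theta> * ?U (x - d l) + (1 - \<theta>) * ?U x" for x
      proof -
        have "tail S (rstar (insert l A) \<theta>) d x = rstar (insert l A) \<theta> l * tail S' (rstar (insert l A) \<theta>) d (x - d l)
          + (1 - rstar (insert l A) \<theta> l) * tail S' (rstar (insert l A) \<theta>) d x"
          unfolding S'_def by (rule tail_remove[OF fS lS])
        moreover have "tail S' (rstar (insert l A) \<theta>) d y = ?U y" for y
          using S'_def by (intro tail_cong) (auto simp: rstar_def)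
        ultimately show ?thesis by (simp add: rstar_def)
      qed
      have e2: "tail S (rstar A \<theta>) d x = ?U (x - d l)" for x
      proof -
        have "tail S (rstar A \<theta>) d x = rstar A \<theta> l * ?U (x - d l) + (1 - rstar A \<theta> l) * ?U x"
          unfolding S'_def by (rule tail_remove[OF fS lS])
        then show ?thesis using lA by (simp add: rstar_def)
      qed
      have RHS: "tail (set (j # xs)) (rstar (set (take k (j # xs))) \<theta>) d c
          = \<theta> * ?U (c - d j - d l) + (1 - \<theta>) * ?U (c - d l)"
      proof -
        have "tail (set (j # xs)) (rstar (insert j A) \<theta>) d c
          = rstar (insert j A) \<theta> j * tail S (rstar (insert j A) \<theta>) d (c - d j)
            + (1 - rstar (insert j A) \<theta> j) * tail S (rstar (insert j A) \<theta>) d c"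
          using fS jS S_def by (simp add: tail_insert)
        moreover have "tail S (rstar (insert j A) \<theta>) d x = tail S (rstar A \<theta>) d x" for x
          using jS by (intro tail_cong) (auto simp: rstar_def)
        ultimately show ?thesis using tk e2 by (simp add: rstar_def algebra_simps)
      qed
      have "tail S (rstar (insert l A) \<theta>) d (c - d j) = \<theta> * ?U (c - d j - d l) + (1 - \<theta>) * ?U (c - d j)"
        by (rule e1)
      also have "\<dots> \<le> \<theta> * ?U (c - d j - d l) + (1 - \<theta>) * ?U (c - d l)"
        using Umono[of "c - d l" "c - d j"] djl Cons.prems by (intro add_mono mult_left_mono) auto
      finally show ?thesis using step1 step2 RHS by simp
    qed
  qed
qed



definition fz :: "nat \<Rightarrow> (nat \<Rightarrow> nat) \<Rightarrow> nat set \<Rightarrow> nat \<Rightarrow> nat \<Rightarrow> real" where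
  "fz I h B = (\<lambda>i j. if i < I \<and> j < 2 then (if (i \<in> B) = (j = h i) then 1 else 0) else 0)"

lemma fz_in_B:
  assumes "h i < 2" "i < I"
  shows "fz I h B i (h i) = 1 \<longleftrightarrow> i \<in> B"
  using assms by (simp add: fz_def)

lemma fz_Zset:
  assumes "\<forall>i. h i < 2"
  shows "fz I h B \<in> Zset I"
proof -
  have "fz I h B i 0 + fz I h B i 1 = 1" if "i < I" for i
    using assms[rule_format, of i] that by (cases "h i") (auto simp: fz_def)
  then show ?thesis unfolding Zset_def Vspace_def by (auto simp: fz_def)
qed

lemma fz_inj:
  assumes "\<forall>i. h i < 2"
  shows "inj_on (fz I h) (Pow {..<I})"
proof (rule inj_onI)
  fix B B' assume B: "B \<in> Pow {..<I}" "B' \<in> Pow {..<I}" and e: "fz I h B = fz I h B'"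
  show "B = B'"
  proof
    show "B \<subseteq> B'"
    proof
      fix i assume "i \<in> B"
      then have "i < I" using B by auto
      have h2: "h i < 2" using assms by blast
      have "fz I h B i (h i) = 1" using fz_in_B[where h=h and i=i and I=I, OF h2 \<open>i < I\<close>] \<open>i \<in> B\<close> by blast
      then have "fz I h B' i (h i) = 1" using e by simp
      then show "i \<in> B'" using fz_in_B[where h=h and i=i and I=I, OF h2 \<open>i < I\<close>] by blast
    qed
    show "B' \<subseteq> B"
    proof
      fix i assume "i \<in> B'"
      then have "i < I" using B by auto
      have h2: "h i < 2" using assms by blast
      have "fz I h B' i (h i) = 1" using fz_in_B[where h=h and i=i and I=I, OF h2 \<open>i < I\<close>] \<open>i \<in> B'\<close> by blast
      then have "fz I h B i (h i) = 1" using e by simp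
      then show "i \<in> B" using fz_in_B[where h=h and i=i and I=I, OF h2 \<open>i < I\<close>] by blast
    qed
  qed
qed

lemma Zset_img:
  assumes "\<forall>i. h i < 2"
  shows "Zset I = fz I h ` Pow {..<I}"
proof
  show "fz I h ` Pow {..<I} \<subseteq> Zset I" using fz_Zset[OF assms] by auto
  show "Zset I \<subseteq> fz I h ` Pow {..<I}"
  proof
    fix z assume z: "z \<in> Zset I"
    define B where "B = {i. i < I \<and> z i (h i) = 1}"
    have "z = fz I h B"
    proof (intro ext)
      fix i j
      show "z i j = fz I h B i j"
      proof (cases "i < I \<and> j < 2")
        case True
        then have zz: "z i 0 \<in> {0,1}" "z i 1 \<in> {0,1}" "z i 0 + z i 1 = 1" using z by (auto simp: Zset_def)
        have hc: "h i = 0 \<or> h i = 1" using assms[rule_format, of i] by auto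
        have jc: "j = 0 \<or> j = 1" using True by auto
        have zc: "(z i 0 = 0 \<and> z i 1 = 1) \<or> (z i 0 = 1 \<and> z i 1 = 0)" using zz by auto
        have iI: "i < I" using True by simp
        show ?thesis using hc jc zc iI
          by (elim disjE conjE; simp add: fz_def B_def)
      next
        case False
        then show ?thesis using z by (auto simp: fz_def Zset_def Vspace_def)
      qed
    qed
    moreover have "B \<in> Pow {..<I}" by (auto simp: B_def)
    ultimately show "z \<in> fz I h ` Pow {..<I}" by blast
  qed
qed

lemma finite_Zset: "finite (Zset I)"
  using Zset_img[of "\<lambda>_. 0" I] by simp

lemma Prob_pow:
  assumes "\<forall>i. h i < 2"
  shows "Prob I p E = (\<Sum>B\<in>Pow {..<I}. assign_prob I p (fz I h B) * (if E (fz I h B) then 1 else 0))"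
proof -
  have "Prob I p E = (\<Sum>z\<in>Zset I. if E z then assign_prob I p z else 0)"
    unfolding Prob_def using finite_Zset by (rule sum.inter_filter)
  also have "\<dots> = (\<Sum>z\<in>fz I h ` Pow {..<I}. if E z then assign_prob I p z else 0)"
    using Zset_img[OF assms] by simp
  also have "\<dots> = (\<Sum>B\<in>Pow {..<I}. if E (fz I h B) then assign_prob I p (fz I h B) else 0)"
    using fz_inj[OF assms] by (simp add: sum.reindex)
  finally show ?thesis by (simp add: if_distrib cong: if_cong)
qed

lemma ap_fz:
  assumes "\<forall>i. h i < 2"
  shows "assign_prob I p (fz I h B) = (\<Prod>i<I. if i \<in> B then p i (h i) else p i (1 - h i))"
  unfolding assign_prob_def
proof (rule prod.cong[OF refl])
  fix i assume i: "i \<in> {..<I}"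
  have "h i = 0 \<or> h i = 1" using assms[rule_format, of i] by auto
  then show "(\<Prod>j<2. if fz I h B i j = 1 then p i j else 1) = (if i \<in> B then p i (h i) else p i (1 - h i))"
    using i by (auto simp: fz_def numeral_2_eq_2 lessThan_Suc)
qed

lemma assign_prob_nonneg:
  assumes "\<forall>i<I. \<forall>j<2. 0 \<le> p i j"
  shows "0 \<le> assign_prob I p z"
  unfolding assign_prob_def using assms by (intro prod_nonneg) auto

lemma Prob_mono:
  assumes "\<forall>i<I. \<forall>j<2. 0 \<le> p i j" "\<forall>z\<in>Zset I. E z \<longrightarrow> E' z"
  shows "Prob I p E \<le> Prob I p E'"
  unfolding Prob_def
  using assms finite_Zset assign_prob_nonneg[OF assms(1)]
  by (intro sum_mono2) auto

lemma Prob_compl: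
  "Prob I p E + Prob I p (\<lambda>z. \<not> E z) = Prob I p (\<lambda>_. True)"
proof -
  have "Prob I p (\<lambda>_. True) = sum (assign_prob I p) ({z\<in>Zset I. E z} \<union> {z\<in>Zset I. \<not> E z})"
    unfolding Prob_def by (intro sum.cong) auto
  also have "\<dots> = Prob I p E + Prob I p (\<lambda>z. \<not> E z)"
    unfolding Prob_def using finite_Zset by (intro sum.union_disjoint) auto
  finally show ?thesis by simp
qed

lemma Prob_total:
  assumes "\<forall>i<I. p i 0 + p i 1 = 1"
  shows "Prob I p (\<lambda>_. True) = 1"
proof -
  have h: "\<forall>i. (\<lambda>_. 0::nat) i < 2" by simp
  have e: "p i 1 = 1 - p i 0" if "i < I" for i
  proof -
    have "p i 0 + p i 1 = 1" using assms that by blast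
    then show ?thesis by linarith
  qed
  have "Prob I p (\<lambda>_. True) = (\<Sum>B\<in>Pow {..<I}. (\<Prod>i<I. if i \<in> B then p i 0 else p i 1))"
    unfolding Prob_pow[OF h] ap_fz[OF h] diff_zero by simp
  also have "\<dots> = (\<Sum>B\<in>Pow {..<I}. (\<Prod>i<I. if i \<in> B then p i 0 else 1 - p i 0))"
    by (intro sum.cong refl prod.cong) (use e in \<open>auto simp: One_nat_def\<close>)
  also have "\<dots> = tail {..<I} (\<lambda>i. p i 0) (\<lambda>_. 0) 0" unfolding tail_def by simp
  also have "\<dots> = 1" by (simp add: tail_total)
  finally show ?thesis .
qed

definition hi :: "(nat \<Rightarrow> nat \<Rightarrow> real) \<Rightarrow> nat \<Rightarrow> nat" where
  "hi qv i = (if qv i 0 < qv i 1 then 1 else 0)"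

lemma tstat_fz:
  assumes "B \<subseteq> {..<I}"
  shows "tstat I q (fz I (hi (q y)) B) y
    = (\<Sum>i<I. min (q y i 0) (q y i 1)) + sum (\<lambda>i. \<bar>q y i 0 - q y i 1\<bar>) B"
proof -
  let ?m = "\<lambda>i. min (q y i 0) (q y i 1)" and ?d = "\<lambda>i. \<bar>q y i 0 - q y i 1\<bar>"
  have "tstat I q (fz I (hi (q y)) B) y = (\<Sum>i<I. ?m i + (if i \<in> B then ?d i else 0))"
    unfolding tstat_def
  proof (rule sum.cong[OF refl])
    fix i assume "i \<in> {..<I}"
    then show "(\<Sum>j<2. fz I (hi (q y)) B i j * q y i j) = ?m i + (if i \<in> B then ?d i else 0)"
      by (auto simp: fz_def hi_def numeral_2_eq_2 lessThan_Suc)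
  qed
  also have "\<dots> = (\<Sum>i<I. ?m i) + (\<Sum>i<I. if i \<in> B then ?d i else 0)"
    by (simp add: sum.distrib)
  also have "(\<Sum>i<I. if i \<in> B then ?d i else 0) = sum ?d ({..<I} \<inter> B)"
    by (rule sum.inter_restrict[OF finite_lessThan, symmetric])
  also have "{..<I} \<inter> B = B" using assms by auto
  finally show ?thesis .
qed

lemma Prob_tail:
  assumes "\<forall>i<I. p i 0 + p i 1 = 1"
  shows "Prob I p (\<lambda>a. c \<le> tstat I q a y) = tail {..<I} (\<lambda>i. p i (hi (q y) i)) (\<lambda>i. \<bar>q y i 0 - q y i 1\<bar>)
      (c - (\<Sum>i<I. min (q y i 0) (q y i 1)))"
proof -
  have h: "\<forall>i. hi (q y) i < 2" by (simp add: hi_def)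
  show ?thesis
    unfolding Prob_pow[OF h] ap_fz[OF h] tail_def
  proof (intro sum.cong refl arg_cong2[where f="(*)"])
    fix B assume B: "B \<in> Pow {..<I}"
    show "(\<Prod>i<I. if i \<in> B then p i (hi (q y) i) else p i (1 - hi (q y) i)) =
      (\<Prod>i<I. if i \<in> B then p i (hi (q y) i) else 1 - p i (hi (q y) i))"
      using assms by (intro prod.cong refl) (auto simp: hi_def algebra_simps)
    show "(if c \<le> tstat I q (fz I (hi (q y)) B) y then 1 else 0) =
      (if c - (\<Sum>i<I. min (q y i 0) (q y i 1)) \<le> sum (\<lambda>i. \<bar>q y i 0 - q y i 1\<bar>) B then 1 else (0::real))"
      using B tstat_fz[of B I q y] by auto
  qed
qed



lemma theta_01:
  assumes "1 \<le> \<Gamma>0"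
  shows "0 \<le> theta \<Gamma>0" "theta \<Gamma>0 \<le> 1"
proof -
  have "0 \<le> theta \<Gamma>0 \<and> theta \<Gamma>0 \<le> 1"
  proof (cases \<Gamma>0)
    case (real g)
    then have "1 \<le> g" using assms by simp
    then show ?thesis using real by (simp add: theta_def)
  next
    case PInf then show ?thesis by (simp add: theta_def)
  next
    case MInf then show ?thesis using assms by simp
  qed
  then show "0 \<le> theta \<Gamma>0" "theta \<Gamma>0 \<le> 1" by auto
qed

lemma good_pair:
  assumes pn: "0 \<le> p i 0" "0 \<le> p i 1" and ps: "p i 0 + p i 1 = 1"
    and h: "h < 2" and g: "gamma_star p i \<le> \<Gamma>0" and G: "1 \<le> \<Gamma>0"
  shows "p i h \<le> theta \<Gamma>0"
proof -
  have ph: "p i h \<le> max (p i 0) (p i 1)" using h by (cases h) auto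
  show ?thesis
  proof (cases \<Gamma>0)
    case PInf
    then show ?thesis using ph pn ps by (simp add: theta_def)
  next
    case MInf then show ?thesis using G by simp
  next
    case (real gg)
    then have gg1: "1 \<le> gg" using G by simp
    have mn: "min (p i 0) (p i 1) \<noteq> 0"
    proof
      assume "min (p i 0) (p i 1) = 0"
      then have "gamma_star p i = \<infinity>" by (simp add: gamma_star_def)
      then show False using g real by simp
    qed
    have m0: "0 \<le> min (p i 0) (p i 1)" using pn by simp
    have mpos: "0 < min (p i 0) (p i 1)" using le_neq_trans[OF m0] mn by metis
    have "ereal (max (p i 0) (p i 1) / min (p i 0) (p i 1)) \<le> ereal gg"
      using g real mn by (simp add: gamma_star_def)
    then have "max (p i 0) (p i 1) / min (p i 0) (p i 1) \<le> gg" by simp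
    then have M: "max (p i 0) (p i 1) \<le> gg * min (p i 0) (p i 1)"
      using mpos by (simp add: divide_le_eq)
    have s: "max (p i 0) (p i 1) + min (p i 0) (p i 1) = 1" using ps by (simp add: max_def min_def)
    define MM where "MM = max (p i 0) (p i 1)"
    define mm where "mm = min (p i 0) (p i 1)"
    have M': "MM \<le> gg * mm" using M unfolding MM_def mm_def .
    have e: "mm = 1 - MM" using s unfolding MM_def mm_def by linarith
    have "gg * mm = gg - gg * MM" unfolding e by (simp add: algebra_simps)
    then have "MM * (1 + gg) \<le> gg" using M' by (simp add: algebra_simps)
    then have "MM \<le> gg / (1 + gg)" using gg1 by (simp add: le_divide_eq)
    then have "max (p i 0) (p i 1) \<le> gg / (1 + gg)" unfolding MM_def .
    then have "p i h \<le> gg / (1 + gg)" using ph by linarith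
    then show ?thesis using real by (simp add: theta_def)
  qed
qed

lemma gamma_ge1:
  assumes pn: "0 \<le> p i 0" "0 \<le> p i 1"
  shows "1 \<le> gamma_star p i"
proof (cases "min (p i 0) (p i 1) = 0")
  case True then show ?thesis by (simp add: gamma_star_def)
next
  case False
  have m0: "0 \<le> min (p i 0) (p i 1)" using pn by simp
  have "0 < min (p i 0) (p i 1)" using le_neq_trans[OF m0] False by metis
  moreover have "min (p i 0) (p i 1) \<le> max (p i 0) (p i 1)" by simp
  ultimately have "1 \<le> max (p i 0) (p i 1) / min (p i 0) (p i 1)" by simp
  then show ?thesis using False by (simp add: gamma_star_def)
qed

lemma kth_in:
  assumes "1 \<le> k" "k \<le> I"
  shows "kth_smallest I g k \<in> g ` {..<I}"
proof -
  have "sort (map g [0..<I]) ! (k - 1) \<in> set (sort (map g [0..<I]))"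
    using assms by (intro nth_mem) simp
  then show ?thesis unfolding kth_smallest_def by auto
qed

lemma kth_count:
  fixes g :: "nat \<Rightarrow> ereal"
  assumes "1 \<le> k" "k \<le> I"
  shows "k \<le> card {i\<in>{..<I}. g i \<le> kth_smallest I g k}"
proof -
  define L where "L = map g [0..<I]"
  define v where "v = kth_smallest I g k"
  have v: "v = sort L ! (k - 1)" unfolding v_def L_def kth_smallest_def ..
  have "{i\<in>{..<I}. g i \<le> v} = set (filter (\<lambda>i. g i \<le> v) [0..<I])" by auto
  moreover have "card (set (filter (\<lambda>i. g i \<le> v) [0..<I])) = length (filter (\<lambda>i. g i \<le> v) [0..<I])"
    by (rule distinct_card) simp
  ultimately have "card {i\<in>{..<I}. g i \<le> v} = length (filter (\<lambda>i. g i \<le> v) [0..<I])"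
    by simp
  also have "\<dots> = length (filter (\<lambda>x. x \<le> v) L)"
    unfolding L_def filter_map by (simp add: comp_def)
  also have "\<dots> = length (filter (\<lambda>x. x \<le> v) (sort L))"
    by (simp add: filter_sort)
  finally have c: "card {i\<in>{..<I}. g i \<le> v} = length (filter (\<lambda>x. x \<le> v) (sort L))" .
  have lenL: "length (sort L) = I" by (simp add: L_def)
  have all: "\<forall>x\<in>set (take k (sort L)). x \<le> v"
  proof
    fix x assume "x \<in> set (take k (sort L))"
    then obtain j where j: "j < length (take k (sort L))" "x = take k (sort L) ! j"
      by (auto simp: in_set_conv_nth)
    then have jk: "j < k" "x = sort L ! j" using assms lenL by auto
    show "x \<le> v" unfolding v jk(2)
      using jk assms lenL by (intro sorted_nth_mono) auto
  qed
  have "k = length (filter (\<lambda>x. x \<le> v) (take k (sort L)))"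
    using all assms lenL by (simp add: filter_True min_def)
  also have "\<dots> \<le> length (filter (\<lambda>x. x \<le> v) (sort L))"
  proof -
    have "length (filter (\<lambda>x. x \<le> v) (sort L)) = length (filter (\<lambda>x. x \<le> v) (take k (sort L))) + length (filter (\<lambda>x. x \<le> v) (drop k (sort L)))"
      by (metis append_take_drop_id filter_append length_append)
    then show ?thesis by linarith
  qed
  finally show ?thesis using c v_def by simp
qed



lemma Tbar_eq:
  assumes "bij_betw \<pi> {..<I} {..<I}" "k \<le> I"
  shows "Tbar_tail I qv \<pi> \<Gamma>0 k c = tail {..<I} (rstar (\<pi> ` {..<k}) (theta \<Gamma>0)) (\<lambda>i. \<bar>qv i 0 - qv i 1\<bar>)
      (c - (\<Sum>i<I. min (qv i 0) (qv i 1)))"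
proof -
  define Ik where "Ik = \<pi> ` {..<k}"
  define D where "D = {..<I} - Ik"
  define \<theta> where "\<theta> = theta \<Gamma>0"
  let ?m = "\<lambda>i. min (qv i 0) (qv i 1)" and ?d = "\<lambda>i. \<bar>qv i 0 - qv i 1\<bar>"
  have IkS: "Ik \<subseteq> {..<I}" unfolding Ik_def using assms bij_betw_imp_surj_on by fastforce
  have fIk: "finite Ik" "finite D" unfolding Ik_def D_def by auto
  have U: "{..<I} = Ik \<union> D" "Ik \<inter> D = {}" using IkS unfolding D_def by auto
  have "tail {..<I} (rstar Ik \<theta>) ?d (c - sum ?m {..<I}) = tail (Ik \<union> D) (rstar Ik \<theta>) ?d (c - sum ?m {..<I})"
    using U by simp
  also have "\<dots> = tail Ik (rstar Ik \<theta>) ?d (c - sum ?m {..<I} - sum ?d D)"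
    using fIk U by (intro tail_ones) (auto simp: rstar_def)
  also have "\<dots> = tail Ik (\<lambda>_. \<theta>) ?d (c - sum ?m {..<I} - sum ?d D)"
    by (intro tail_cong) (auto simp: rstar_def)
  also have "\<dots> = (\<Sum>B\<in>Pow Ik. \<theta> ^ card B * (1 - \<theta>) ^ card (Ik - B) *
       (if c - sum ?m {..<I} - sum ?d D \<le> sum ?d B then 1 else 0))"
    by (rule tail_const[OF fIk(1)])
  also have "\<dots> = Tbar_tail I qv \<pi> \<Gamma>0 k c"
    unfolding Tbar_tail_def Let_def Ik_def[symmetric] \<theta>_def[symmetric] D_def[symmetric]
  proof (intro sum.cong refl arg_cong2[where f="(*)"])
    fix B assume B: "B \<in> Pow Ik"
    then have BI: "B \<subseteq> Ik" by auto
    have fB: "finite B" using BI fIk finite_subset by auto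
    have mx: "max (qv i 0) (qv i 1) = ?m i + ?d i" for i by (simp add: max_def min_def)
    have s1: "(\<Sum>i\<in>B. max (qv i 0) (qv i 1)) = sum ?m B + sum ?d B"
      unfolding mx by (simp add: sum.distrib)
    have s2: "(\<Sum>i\<in>D. max (qv i 0) (qv i 1)) = sum ?m D + sum ?d D"
      unfolding mx by (simp add: sum.distrib)
    have s3: "sum ?m Ik = sum ?m (Ik - B) + sum ?m B"
      using fIk BI by (simp add: sum.subset_diff)
    have s4: "sum ?m {..<I} = sum ?m Ik + sum ?m D"
      using U fIk by (simp add: sum.union_disjoint)
    show "(if c - sum ?m {..<I} - sum ?d D \<le> sum ?d B then 1 else 0) =
      (if c \<le> (\<Sum>i\<in>B. max (qv i 0) (qv i 1)) + (\<Sum>i\<in>Ik - B. min (qv i 0) (qv i 1)) +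
           (\<Sum>i\<in>D. max (qv i 0) (qv i 1)) then 1 else (0::real))"
      using s1 s2 s3 s4 by auto
  qed
  finally show ?thesis unfolding Ik_def \<theta>_def by simp
qed

lemma Prob_le1:
  assumes "\<forall>i<I. \<forall>j<2. 0 \<le> p i j" "\<forall>i<I. p i 0 + p i 1 = 1"
  shows "Prob I p E \<le> 1"
  using Prob_mono[OF assms(1), of E "\<lambda>_. True"] Prob_total[OF assms(2)] by simp

lemma dominance:
  assumes pn: "\<forall>i<I. \<forall>j<2. 0 \<le> p i j" and ps: "\<forall>i<I. p i 0 + p i 1 = 1"
    and so: "sorts_pairs I (q y) \<pi>" and kI: "k \<le> I" and G: "1 \<le> \<Gamma>0"
    and cnt: "k \<le> card {i\<in>{..<I}. gamma_star p i \<le> \<Gamma>0}"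
  shows "Prob I p (\<lambda>a. c \<le> tstat I q a y) \<le> pbar I (q y) \<pi> \<Gamma>0 k c"
proof (cases "k = 0")
  case True
  then show ?thesis using Prob_le1[OF pn ps] by (simp add: pbar_def)
next
  case False
  let ?r = "\<lambda>i. p i (hi (q y) i)" and ?d = "\<lambda>i. \<bar>q y i 0 - q y i 1\<bar>"
    and ?c = "c - (\<Sum>i<I. min (q y i 0) (q y i 1))"
  define \<theta> where "\<theta> = theta \<Gamma>0"
  have bij: "bij_betw \<pi> {..<I} {..<I}" using so by (simp add: sorts_pairs_def)
  have srt: "\<forall>a b. a \<le> b \<longrightarrow> b < I \<longrightarrow> ?d (\<pi> a) \<le> ?d (\<pi> b)" using so by (simp add: sorts_pairs_def)
  define xs where "xs = map \<pi> [0..<I]"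
  have setxs: "set xs = {..<I}"
    unfolding xs_def using bij bij_betw_imp_surj_on by (fastforce simp: atLeast0LessThan)
  have dxs: "distinct xs" unfolding xs_def distinct_map using bij bij_betw_imp_inj_on
    by (fastforce simp: atLeast0LessThan)
  have sxs: "sorted_wrt (\<lambda>x y. ?d x \<le> ?d y) xs"
    unfolding xs_def sorted_wrt_map
    by (rule sorted_wrt_mono_rel[OF _ sorted_wrt_upt[of 0 I]]) (use srt in auto)
  have tk: "set (take k xs) = \<pi> ` {..<k}"
    unfolding xs_def using kI by (simp add: take_map atLeast0LessThan min_def)
  have r01: "\<forall>i\<in>set xs. 0 \<le> ?r i \<and> ?r i \<le> 1"
  proof
    fix i assume "i \<in> set xs"
    then have i: "i < I" using setxs by auto
    have "hi (q y) i < 2" by (simp add: hi_def)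
    then have hc: "hi (q y) i = 0 \<or> hi (q y) i = 1" by auto
    have a: "0 \<le> p i 0" "0 \<le> p i 1" "p i 0 + p i 1 = 1" using pn ps i by auto
    from hc show "0 \<le> ?r i \<and> ?r i \<le> 1"
    proof
      assume "hi (q y) i = 0" then show ?thesis using a by simp
    next
      assume "hi (q y) i = 1" then show ?thesis using a by simp
    qed
  qed
  have th: "0 \<le> \<theta>" "\<theta> \<le> 1" using theta_01[OF G] \<theta>_def by auto
  have cnt2: "k \<le> card {i\<in>set xs. ?r i \<le> \<theta>}"
  proof -
    have "{i\<in>{..<I}. gamma_star p i \<le> \<Gamma>0} \<subseteq> {i\<in>set xs. ?r i \<le> \<theta>}"
    proof
      fix i assume "i \<in> {i\<in>{..<I}. gamma_star p i \<le> \<Gamma>0}"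
      then have i: "i < I" "gamma_star p i \<le> \<Gamma>0" by auto
      have "?r i \<le> \<theta>" unfolding \<theta>_def
        by (rule good_pair) (use pn ps i G in \<open>auto simp: hi_def\<close>)
      then show "i \<in> {i\<in>set xs. ?r i \<le> \<theta>}" using i setxs by auto
    qed
    then have "card {i\<in>{..<I}. gamma_star p i \<le> \<Gamma>0} \<le> card {i\<in>set xs. ?r i \<le> \<theta>}"
      by (intro card_mono) auto
    then show ?thesis using cnt by linarith
  qed
  have "Prob I p (\<lambda>a. c \<le> tstat I q a y) = tail (set xs) ?r ?d ?c"
    using Prob_tail[OF ps, of c q y] setxs by simp
  also have "\<dots> \<le> tail (set xs) (rstar (set (take k xs)) \<theta>) ?d ?c"
    by (rule dom_list[OF dxs sxs r01 _ th cnt2]) simp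
  also have "\<dots> = Tbar_tail I (q y) \<pi> \<Gamma>0 k c"
    using Tbar_eq[OF bij kI, of "q y" \<Gamma>0 c] tk setxs \<theta>_def by simp
  finally show ?thesis using False by (simp add: pbar_def)
qed



lemma Z01:
  assumes "z \<in> Zset I"
  shows "0 \<le> z i j" "z i j \<le> 1"
proof -
  have "0 \<le> z i j \<and> z i j \<le> 1"
  proof (cases "i < I \<and> j < 2")
    case True
    then have "z i j \<in> {0,1}" using assms by (auto simp: Zset_def)
    then show ?thesis by auto
  next
    case False
    then have "z i j = 0" using assms by (auto simp: Zset_def Vspace_def)
    then show ?thesis by simp
  qed
  then show "0 \<le> z i j" "z i j \<le> 1" by auto
qed

lemma Yle:
  assumes "Y1 \<in> Vspace I" "Y0 \<in> Vspace I" "\<forall>i<I. \<forall>j<2. Y1 i j \<le> Y0 i j"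
  shows "Y1 i j \<le> Y0 i j"
proof (cases "i < I \<and> j < 2")
  case True then show ?thesis using assms by auto
next
  case False then show ?thesis using assms by (auto simp: Vspace_def)
qed

lemma Yobs_V:
  assumes "Y1 \<in> Vspace I" "Y0 \<in> Vspace I" "z \<in> Zset I"
  shows "Yobs Y1 Y0 z \<in> Vspace I"
  using assms by (auto simp: Vspace_def Zset_def Yobs_def)

lemma EI_key:
  assumes EI: "effect_increasing I q"
    and Y: "Y1 \<in> Vspace I" "Y0 \<in> Vspace I" "\<forall>i<I. \<forall>j<2. Y1 i j \<le> Y0 i j"
    and z: "z \<in> Zset I" and a: "a \<in> Zset I"
  shows "tstat I q a (Yobs Y1 Y0 a) \<le> tstat I q a (Yobs Y1 Y0 z)"
proof -
  define \<eta> where "\<eta> = (\<lambda>i j. (1 - z i j) * (Y0 i j - Y1 i j))"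
  define \<xi> where "\<xi> = (\<lambda>i j. z i j * (Y1 i j - Y0 i j))"
  have e1: "\<eta> \<in> Vspace I" "\<xi> \<in> Vspace I" using Y unfolding \<eta>_def \<xi>_def Vspace_def by auto
  have e2: "\<forall>i j. 0 \<le> \<eta> i j"
    unfolding \<eta>_def using Z01[OF z] Yle[OF Y] by (auto intro!: mult_nonneg_nonneg)
  have e3: "\<forall>i j. \<xi> i j \<le> 0"
    unfolding \<xi>_def using Z01[OF z] Yle[OF Y] by (auto intro!: mult_nonneg_nonpos)
  have e4: "(\<lambda>i j. Yobs Y1 Y0 a i j + a i j * \<eta> i j + (1 - a i j) * \<xi> i j) = Yobs Y1 Y0 z"
    unfolding \<eta>_def \<xi>_def Yobs_def by (intro ext) (simp add: algebra_simps)
  have "tstat I q a (\<lambda>i j. Yobs Y1 Y0 a i j + a i j * \<eta> i j + (1 - a i j) * \<xi> i j) \<ge> tstat I q a (Yobs Y1 Y0 a)"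
    using EI a Yobs_V[OF Y(1,2) a] e1 e2 e3 unfolding effect_increasing_def by blast
  then show ?thesis unfolding e4 .
qed

lemma DI_key:
  assumes DI: "differential_increasing I q"
    and Y: "Y1 \<in> Vspace I" "Y0 \<in> Vspace I" "\<forall>i<I. \<forall>j<2. Y1 i j \<le> Y0 i j"
    and z: "z \<in> Zset I" and a: "a \<in> Zset I"
    and le: "tstat I q z Y0 \<le> tstat I q a Y0"
  shows "tstat I q z (Yobs Y1 Y0 z) \<le> tstat I q a (Yobs Y1 Y0 z)"
proof -
  define \<eta> where "\<eta> = (\<lambda>i j. Y0 i j - Y1 i j)"
  have e1: "\<eta> \<in> Vspace I" using Y unfolding \<eta>_def Vspace_def by auto
  have e2: "\<forall>i j. 0 \<le> \<eta> i j" unfolding \<eta>_def using Yle[OF Y] by auto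
  have e4: "(\<lambda>i j. Yobs Y1 Y0 z i j + z i j * \<eta> i j) = Y0"
    unfolding \<eta>_def Yobs_def by (intro ext) (simp add: algebra_simps)
  have "tstat I q a (\<lambda>i j. Yobs Y1 Y0 z i j + z i j * \<eta> i j) - tstat I q a (Yobs Y1 Y0 z)
      \<le> tstat I q z (\<lambda>i j. Yobs Y1 Y0 z i j + z i j * \<eta> i j) - tstat I q z (Yobs Y1 Y0 z)"
    using DI a z Yobs_V[OF Y(1,2) z] e1 e2 unfolding differential_increasing_def by blast
  then show ?thesis unfolding e4 using le by linarith
qed

lemma pvalid:
  fixes s :: "(nat \<Rightarrow> nat \<Rightarrow> real) \<Rightarrow> real"
  assumes pn: "\<forall>i<I. \<forall>j<2. 0 \<le> p i j" and al: "0 \<le> \<alpha>"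
  shows "Prob I p (\<lambda>z. Prob I p (\<lambda>a. s z \<le> s a) \<le> \<alpha>) \<le> \<alpha>"
proof -
  define V where "V = {z\<in>Zset I. Prob I p (\<lambda>a. s z \<le> s a) \<le> \<alpha>}"
  show ?thesis
  proof (cases "V = {}")
    case True
    have "Prob I p (\<lambda>z. Prob I p (\<lambda>a. s z \<le> s a) \<le> \<alpha>) = sum (assign_prob I p) V"
      unfolding V_def by (simp add: Prob_def)
    then show ?thesis using al True by simp
  next
    case False
    have fV: "finite V" unfolding V_def using finite_Zset by simp
    define c where "c = Min (s ` V)"
    have "c \<in> s ` V" unfolding c_def using fV False by (intro Min_in) auto
    then obtain z0 where z0: "z0 \<in> V" "s z0 = c" by auto
    have cmin: "c \<le> s z" if "z \<in> V" for z unfolding c_def using fV that by (intro Min_le) auto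
    have "Prob I p (\<lambda>z. Prob I p (\<lambda>a. s z \<le> s a) \<le> \<alpha>) \<le> Prob I p (\<lambda>z. s z0 \<le> s z)"
      using pn cmin z0 unfolding V_def by (intro Prob_mono) auto
    also have "\<dots> \<le> \<alpha>" using z0 unfolding V_def by simp
    finally show ?thesis .
  qed
qed



theorem theoremA3:
  fixes I :: nat
    and p :: "nat \<Rightarrow> nat \<Rightarrow> real"
    and q :: "(nat \<Rightarrow> nat \<Rightarrow> real) \<Rightarrow> nat \<Rightarrow> nat \<Rightarrow> real"
    and Y1 Y0 :: "nat \<Rightarrow> nat \<Rightarrow> real"
    and ord :: "(nat \<Rightarrow> nat \<Rightarrow> real) \<Rightarrow> nat \<Rightarrow> nat"
    and \<alpha> :: real
  assumes p_nonneg: "\<forall>i<I. \<forall>j<2. 0 \<le> p i j"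
    and p_sum: "\<forall>i<I. p i 0 + p i 1 = 1"
    and Y1: "Y1 \<in> Vspace I" and Y0: "Y0 \<in> Vspace I"
    and bounded_null: "\<forall>i<I. \<forall>j<2. Y1 i j \<le> Y0 i j"
    and stat: "effect_increasing I q \<or> differential_increasing I q"
    and ord: "\<forall>qv. sorts_pairs I qv (ord qv)"
    and alpha: "0 < \<alpha>" "\<alpha> < 1"
  shows
    "(\<forall>k \<in> {1..I}.
        Prob I p (\<lambda>z. kth_smallest I (gamma_star p) k
                        \<in> {\<Gamma>0. 1 \<le> \<Gamma>0 \<and> pbar_obs I q ord Y1 Y0 z \<Gamma>0 k > \<alpha>}) \<ge> 1 - \<alpha>)
     \<and> (\<forall>\<Gamma>0 \<ge> 1.
        Prob I p (\<lambda>z. I_star I p \<Gamma>0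
                        \<in> {I - k | k. k \<le> I \<and> pbar_obs I q ord Y1 Y0 z \<Gamma>0 k > \<alpha>}) \<ge> 1 - \<alpha>)
     \<and> Prob I p (\<lambda>z. gamma_star p \<in>
          (\<Inter>(\<Gamma>0, k) \<in> {(\<Gamma>0, k). 1 \<le> \<Gamma>0 \<and> 1 \<le> k \<and> k \<le> I \<and> pbar_obs I q ord Y1 Y0 z \<Gamma>0 k \<le> \<alpha>}.
              Gspace I - Sset I \<Gamma>0 k)) \<ge> 1 - \<alpha>"
proof -
  define s where "s = (if effect_increasing I q then (\<lambda>a. tstat I q a (Yobs Y1 Y0 a)) else (\<lambda>a. tstat I q a Y0))"
  define F where "F z = Prob I p (\<lambda>a. s z \<le> s a)" for z
  have key: "tstat I q z (Yobs Y1 Y0 z) \<le> tstat I q a (Yobs Y1 Y0 z)"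
    if z: "z \<in> Zset I" and a: "a \<in> Zset I" and le: "s z \<le> s a" for z a
  proof (cases "effect_increasing I q")
    case True
    then have "tstat I q z (Yobs Y1 Y0 z) \<le> tstat I q a (Yobs Y1 Y0 a)" using le by (simp add: s_def)
    also have "\<dots> \<le> tstat I q a (Yobs Y1 Y0 z)"
      by (rule EI_key[OF True Y1 Y0 bounded_null z a])
    finally show ?thesis .
  next
    case False
    then have DI: "differential_increasing I q" using stat by simp
    have "tstat I q z Y0 \<le> tstat I q a Y0" using le False by (simp add: s_def)
    then show ?thesis by (rule DI_key[OF DI Y1 Y0 bounded_null z a])
  qed
  have pb: "\<alpha> < pbar_obs I q ord Y1 Y0 z \<Gamma>0 k"
    if z: "z \<in> Zset I" and Ez: "\<alpha> < F z" and G: "1 \<le> \<Gamma>0" and kI: "k \<le> I"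
      and cnt: "k \<le> card {i\<in>{..<I}. gamma_star p i \<le> \<Gamma>0}" for z \<Gamma>0 k
  proof -
    define y where "y = Yobs Y1 Y0 z"
    have "F z \<le> Prob I p (\<lambda>a. tstat I q z y \<le> tstat I q a y)"
      unfolding F_def y_def using key z p_nonneg by (intro Prob_mono) auto
    also have "\<dots> \<le> pbar I (q y) (ord (q y)) \<Gamma>0 k (tstat I q z y)"
      using ord by (intro dominance[OF p_nonneg p_sum _ kI G cnt]) auto
    also have "\<dots> = pbar_obs I q ord Y1 Y0 z \<Gamma>0 k"
      unfolding pbar_obs_def y_def Let_def ..
    finally show ?thesis using Ez by linarith
  qed
  have PE: "Prob I p (\<lambda>z. \<alpha> < F z) \<ge> 1 - \<alpha>"
  proof -
    have "Prob I p (\<lambda>z. F z \<le> \<alpha>) \<le> \<alpha>"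
      unfolding F_def using pvalid[OF p_nonneg, of \<alpha> s] alpha by simp
    moreover have "Prob I p (\<lambda>z. \<alpha> < F z) + Prob I p (\<lambda>z. \<not> \<alpha> < F z) = 1"
      using Prob_compl[of I p "\<lambda>z. \<alpha> < F z"] Prob_total[OF p_sum] by simp
    ultimately show ?thesis by (simp add: not_less)
  qed
  have g1: "1 \<le> gamma_star p i" if "i < I" for i
    using p_nonneg that by (intro gamma_ge1) auto
  have part1: "\<forall>k \<in> {1..I}.
        Prob I p (\<lambda>z. kth_smallest I (gamma_star p) k
                        \<in> {\<Gamma>0. 1 \<le> \<Gamma>0 \<and> pbar_obs I q ord Y1 Y0 z \<Gamma>0 k > \<alpha>}) \<ge> 1 - \<alpha>"
  proof
    fix k assume k: "k \<in> {1..I}"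
    define \<Gamma>0 where "\<Gamma>0 = kth_smallest I (gamma_star p) k"
    have G: "1 \<le> \<Gamma>0" using kth_in[of k I "gamma_star p"] k g1 unfolding \<Gamma>0_def by auto
    have cnt: "k \<le> card {i\<in>{..<I}. gamma_star p i \<le> \<Gamma>0}"
      using kth_count[of k I "gamma_star p"] k unfolding \<Gamma>0_def by auto
    have "Prob I p (\<lambda>z. \<alpha> < F z) \<le> Prob I p (\<lambda>z. kth_smallest I (gamma_star p) k
                        \<in> {\<Gamma>0. 1 \<le> \<Gamma>0 \<and> pbar_obs I q ord Y1 Y0 z \<Gamma>0 k > \<alpha>})"
      using p_nonneg pb[OF _ _ G _ cnt] G k unfolding \<Gamma>0_def[symmetric] by (intro Prob_mono) auto
    then show "Prob I p (\<lambda>z. kth_smallest I (gamma_star p) k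
                        \<in> {\<Gamma>0. 1 \<le> \<Gamma>0 \<and> pbar_obs I q ord Y1 Y0 z \<Gamma>0 k > \<alpha>}) \<ge> 1 - \<alpha>"
      using PE by linarith
  qed
  have part2: "\<forall>\<Gamma>0 \<ge> 1.
        Prob I p (\<lambda>z. I_star I p \<Gamma>0
                        \<in> {I - k | k. k \<le> I \<and> pbar_obs I q ord Y1 Y0 z \<Gamma>0 k > \<alpha>}) \<ge> 1 - \<alpha>"
  proof (intro allI impI)
    fix \<Gamma>0 :: ereal assume G: "1 \<le> \<Gamma>0"
    define A where "A = {i\<in>{..<I}. gamma_star p i \<le> \<Gamma>0}"
    define k where "k = card A"
    have AI: "A \<subseteq> {..<I}" unfolding A_def by auto
    have kI: "k \<le> I" unfolding k_def using card_mono[OF _ AI] by simp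
    have "{i \<in> {..<I}. gamma_star p i > \<Gamma>0} = {..<I} - A" unfolding A_def by auto
    then have Is: "I_star I p \<Gamma>0 = I - k"
      unfolding I_star_def k_def using AI by (simp add: card_Diff_subset finite_subset)
    have "Prob I p (\<lambda>z. \<alpha> < F z) \<le> Prob I p (\<lambda>z. I_star I p \<Gamma>0
                        \<in> {I - k | k. k \<le> I \<and> pbar_obs I q ord Y1 Y0 z \<Gamma>0 k > \<alpha>})"
    proof (intro Prob_mono[OF p_nonneg] ballI impI)
      fix z assume "z \<in> Zset I" "\<alpha> < F z"
      then have "\<alpha> < pbar_obs I q ord Y1 Y0 z \<Gamma>0 k"
        using pb G kI unfolding k_def A_def by blast
      then show "I_star I p \<Gamma>0 \<in> {I - k | k. k \<le> I \<and> pbar_obs I q ord Y1 Y0 z \<Gamma>0 k > \<alpha>}"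
        using Is kI by blast
    qed
    then show "Prob I p (\<lambda>z. I_star I p \<Gamma>0
                        \<in> {I - k | k. k \<le> I \<and> pbar_obs I q ord Y1 Y0 z \<Gamma>0 k > \<alpha>}) \<ge> 1 - \<alpha>"
      using PE by linarith
  qed
  have part3: "Prob I p (\<lambda>z. gamma_star p \<in>
          (\<Inter>(\<Gamma>0, k) \<in> {(\<Gamma>0, k). 1 \<le> \<Gamma>0 \<and> 1 \<le> k \<and> k \<le> I \<and> pbar_obs I q ord Y1 Y0 z \<Gamma>0 k \<le> \<alpha>}.
              Gspace I - Sset I \<Gamma>0 k)) \<ge> 1 - \<alpha>"
  proof -
    have gs: "gamma_star p \<in> Gspace I" unfolding Gspace_def using g1 by auto
    have "Prob I p (\<lambda>z. \<alpha> < F z) \<le> Prob I p (\<lambda>z. gamma_star p \<in>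
          (\<Inter>(\<Gamma>0, k) \<in> {(\<Gamma>0, k). 1 \<le> \<Gamma>0 \<and> 1 \<le> k \<and> k \<le> I \<and> pbar_obs I q ord Y1 Y0 z \<Gamma>0 k \<le> \<alpha>}.
              Gspace I - Sset I \<Gamma>0 k))"
    proof (intro Prob_mono[OF p_nonneg] ballI impI)
      fix z assume z: "z \<in> Zset I" "\<alpha> < F z"
      have "gamma_star p \<in> Gspace I - Sset I \<Gamma>0 k"
        if "1 \<le> \<Gamma>0" "1 \<le> k" "k \<le> I" "pbar_obs I q ord Y1 Y0 z \<Gamma>0 k \<le> \<alpha>" for \<Gamma>0 k
      proof (rule ccontr)
        assume "gamma_star p \<notin> Gspace I - Sset I \<Gamma>0 k"
        then have le: "kth_smallest I (gamma_star p) k \<le> \<Gamma>0" using gs by (simp add: Sset_def)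
        have "k \<le> card {i\<in>{..<I}. gamma_star p i \<le> kth_smallest I (gamma_star p) k}"
          using kth_count that by blast
        also have "\<dots> \<le> card {i\<in>{..<I}. gamma_star p i \<le> \<Gamma>0}"
          using le by (intro card_mono) auto
        finally have "\<alpha> < pbar_obs I q ord Y1 Y0 z \<Gamma>0 k" using pb z that by blast
        then show False using that by linarith
      qed
      then show "gamma_star p \<in>
          (\<Inter>(\<Gamma>0, k) \<in> {(\<Gamma>0, k). 1 \<le> \<Gamma>0 \<and> 1 \<le> k \<and> k \<le> I \<and> pbar_obs I q ord Y1 Y0 z \<Gamma>0 k \<le> \<alpha>}.
              Gspace I - Sset I \<Gamma>0 k)" by blast
    qed
    then show ?thesis using PE by linarith
  qed
  show ?thesis using part1 part2 part3 by blast
qed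

end
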